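(* Let $G$ be a finite graph with at least one edge, and let $a \ge 1$ be its arboricity. Then $G$ contains a block vertex $v$ with $\deg_G(v) \le 2a-1$.
   Context: A block of a graph is a maximal biconnected component. A vertex is a cut vertex if it lies in two or more blocks; otherwise it is a block vertex. The arboricity of a graph is the minimum number of forests whose union covers all its edges. *)

theory Defs
  imports Main
begin

definition simple_graph :: "'a set \<Rightarrow> 'a set set \<Rightarrow> bool" where
  "simple_graph V E \<longleftrightarrow> finite V \<and>
     (\<forall>e\<in>E. \<exists>x y. e = {x, y} \<and> x \<noteq> y \<and> x \<in> V \<and> y \<in> V)"

definition degree :: "'a set set \<Rightarrow> 'a \<Rightarrow> nat" where
  "degree E v = card {e \<in> E. v \<in> e}"

definition connected_on :: "'a set set \<Rightarrow> 'a set \<Rightarrow> bool" where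
  "connected_on E S \<longleftrightarrow>
     (\<forall>x\<in>S. \<forall>y\<in>S. (x, y) \<in> {(u, w). {u, w} \<in> E \<and> u \<in> S \<and> w \<in> S}\<^sup>*)"

text \<open>Biconnected (nonseparable) vertex set: nonempty, induces a connected subgraph, and
  remains connected after deleting any single vertex (so K1 and K2 qualify).\<close>
definition biconnected_on :: "'a set \<Rightarrow> 'a set set \<Rightarrow> 'a set \<Rightarrow> bool" where
  "biconnected_on V E S \<longleftrightarrow> S \<noteq> {} \<and> S \<subseteq> V \<and> connected_on E S \<and>
     (\<forall>x\<in>S. connected_on E (S - {x}))"

definition is_block :: "'a set \<Rightarrow> 'a set set \<Rightarrow> 'a set \<Rightarrow> bool" where
  "is_block V E B \<longleftrightarrow> biconnected_on V E B \<and>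
     (\<forall>B'. biconnected_on V E B' \<and> B \<subseteq> B' \<longrightarrow> B' = B)"

definition cut_vertex :: "'a set \<Rightarrow> 'a set set \<Rightarrow> 'a \<Rightarrow> bool" where
  "cut_vertex V E v \<longleftrightarrow> (\<exists>B1 B2. B1 \<noteq> B2 \<and> is_block V E B1 \<and> is_block V E B2 \<and>
                                  v \<in> B1 \<and> v \<in> B2)"

definition block_vertex :: "'a set \<Rightarrow> 'a set set \<Rightarrow> 'a \<Rightarrow> bool" where
  "block_vertex V E v \<longleftrightarrow> v \<in> V \<and> \<not> cut_vertex V E v"

definition has_cycle :: "'a set set \<Rightarrow> bool" where
  "has_cycle F \<longleftrightarrow> (\<exists>cs. length cs \<ge> 3 \<and> distinct cs \<and>
     (\<forall>i < length cs. {cs ! i, cs ! ((i + 1) mod length cs)} \<in> F))"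

definition forest :: "'a set set \<Rightarrow> bool" where
  "forest F \<longleftrightarrow> \<not> has_cycle F"

definition arboricity :: "'a set set \<Rightarrow> nat" where
  "arboricity E = (LEAST k. \<exists>f :: nat \<Rightarrow> 'a set set.
      (\<forall>i<k. f i \<subseteq> E \<and> forest (f i)) \<and> E = (\<Union>i<k. f i))"

end

theory Submission
  imports Defs
begin

definition R :: "'a set set \<Rightarrow> 'a set \<Rightarrow> ('a \<times> 'a) set" where
  "R E A = {(u, w). {u, w} \<in> E \<and> u \<in> A \<and> w \<in> A}"

lemma conn_iff: "connected_on E S \<longleftrightarrow> (\<forall>x\<in>S. \<forall>y\<in>S. (x, y) \<in> (R E S)\<^sup>*)"
  unfolding connected_on_def R_def by simp

lemma R_mono: "A \<subseteq> B \<Longrightarrow> (x, y) \<in> (R E A)\<^sup>* \<Longrightarrow> (x, y) \<in> (R E B)\<^sup>*"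
proof -
  assume "A \<subseteq> B" "(x, y) \<in> (R E A)\<^sup>*"
  moreover have "R E A \<subseteq> R E B" using \<open>A \<subseteq> B\<close> unfolding R_def by auto
  ultimately show ?thesis using rtrancl_mono by blast
qed

lemma R_sym: "(x, y) \<in> (R E A)\<^sup>* \<Longrightarrow> (y, x) \<in> (R E A)\<^sup>*"
proof -
  assume h: "(x, y) \<in> (R E A)\<^sup>*"
  have "sym (R E A)" unfolding R_def sym_def by (auto simp: insert_commute)
  then have "sym ((R E A)\<^sup>*)" by (rule sym_rtrancl)
  then show ?thesis using h by (meson symD)
qed

lemma R_hub: "(w, p) \<in> (R E A)\<^sup>* \<Longrightarrow> (w, q) \<in> (R E A)\<^sup>* \<Longrightarrow> (p, q) \<in> (R E A)\<^sup>*"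
  by (rule rtrancl_trans[OF R_sym])

lemma other_end: "\<exists>x y. e = {x, y} \<Longrightarrow> u \<in> e \<Longrightarrow> \<exists>t. e = {u, t}"
  by auto

lemma R_in: "(x, y) \<in> (R E A)\<^sup>* \<Longrightarrow> x \<in> A \<Longrightarrow> y \<in> A"
  by (induction rule: rtrancl_induct) (auto simp: R_def)

lemma comp_path:
  "(w, t) \<in> (R E A)\<^sup>* \<Longrightarrow> (w, t) \<in> (R E {t. (w, t) \<in> (R E A)\<^sup>*})\<^sup>*"
proof (induction rule: rtrancl_induct)
  case base
  then show ?case by simp
next
  case (step y z)
  have "(w, z) \<in> (R E A)\<^sup>*" using step.hyps by (rule rtrancl_into_rtrancl)
  then have "(y, z) \<in> R E {t. (w, t) \<in> (R E A)\<^sup>*}"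
    using step.hyps unfolding R_def by auto
  then show ?case using step.IH by (rule rtrancl_into_rtrancl[rotated])
qed

lemma comp_connected: "connected_on E {t. (w, t) \<in> (R E A)\<^sup>*}"
  unfolding conn_iff
proof (intro ballI)
  fix p q assume "p \<in> {t. (w, t) \<in> (R E A)\<^sup>*}" "q \<in> {t. (w, t) \<in> (R E A)\<^sup>*}"
  then have "(w, p) \<in> (R E {t. (w, t) \<in> (R E A)\<^sup>*})\<^sup>*" "(w, q) \<in> (R E {t. (w, t) \<in> (R E A)\<^sup>*})\<^sup>*"
    using comp_path[of w p E A] comp_path[of w q E A] by simp_all
  then show "(p, q) \<in> (R E {t. (w, t) \<in> (R E A)\<^sup>*})\<^sup>*"
    by (rule R_hub)
qed

lemma has_cycle_mono: "F \<subseteq> G \<Longrightarrow> has_cycle F \<Longrightarrow> has_cycle G"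
  unfolding has_cycle_def by blast

lemma forest_sub: "forest G \<Longrightarrow> F \<subseteq> G \<Longrightarrow> forest F"
  using has_cycle_mono forest_def by blast

lemma leaf:
  assumes fin: "finite F" and ne: "F \<noteq> {}" and edges: "\<forall>e\<in>F. \<exists>x y. e = {x, y} \<and> x \<noteq> y"
    and nc: "\<not> has_cycle F"
  shows "\<exists>v e. e \<in> F \<and> v \<in> e \<and> (\<forall>e'\<in>F. v \<in> e' \<longrightarrow> e' = e)"
proof -
  define P where "P = (\<lambda>cs. distinct cs \<and> 2 \<le> length cs \<and> set cs \<subseteq> \<Union>F \<and>
      (\<forall>i. Suc i < length cs \<longrightarrow> {cs ! i, cs ! Suc i} \<in> F))"
  have finU: "finite (\<Union>F)" using fin edges by fastforce
  have bnd: "\<forall>cs. P cs \<longrightarrow> length cs < Suc (card (\<Union>F))"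
  proof (intro allI impI)
    fix cs assume "P cs"
    then have "length cs = card (set cs)" "card (set cs) \<le> card (\<Union>F)"
      unfolding P_def using distinct_card[of cs] card_mono[OF finU, of "set cs"] by auto
    then show "length cs < Suc (card (\<Union>F))" by simp
  qed
  obtain e0 where e0: "e0 \<in> F" using ne by blast
  obtain x y where xy: "e0 = {x, y}" "x \<noteq> y" using edges e0 by blast
  have "P [x, y]" unfolding P_def using xy e0 by (auto simp: less_Suc_eq)
  then obtain cs where cs: "P cs" and csmax: "\<forall>cs'. P cs' \<longrightarrow> length cs' \<le> length cs"
    using Lattices_Big.ex_has_greatest_nat[of P "[x,y]" length] bnd by blast
  have dcs: "distinct cs" and lcs: "2 \<le> length cs" and scs: "set cs \<subseteq> \<Union>F"
    and ecs: "\<forall>i. Suc i < length cs \<longrightarrow> {cs ! i, cs ! Suc i} \<in> F"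
    using cs unfolding P_def by auto
  define v where "v = cs ! 0"
  define u where "u = cs ! 1"
  have eF: "{v, u} \<in> F" using ecs lcs unfolding v_def u_def by auto
  have "\<forall>e'\<in>F. v \<in> e' \<longrightarrow> e' = {v, u}"
  proof (intro ballI impI)
    fix e' assume e'F: "e' \<in> F" and ve': "v \<in> e'"
    obtain p q where pq: "e' = {p, q}" "p \<noteq> q" using edges e'F by blast
    obtain w where w: "e' = {v, w}" "w \<noteq> v"
      using pq ve' by auto
    show "e' = {v, u}"
    proof (cases "w = u")
      case True then show ?thesis using w by simp
    next
      case wu: False
      show ?thesis
      proof (cases "w \<in> set cs")
        case False
        have "P (w # cs)" unfolding P_def
        proof (intro conjI allI impI)
          show "distinct (w # cs)" using False dcs by simp
          show "2 \<le> length (w # cs)" using lcs by simp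
          show "set (w # cs) \<subseteq> \<Union> F" using scs w e'F by auto
        next
          fix i assume i: "Suc i < length (w # cs)"
          show "{(w # cs) ! i, (w # cs) ! Suc i} \<in> F"
          proof (cases i)
            case 0 then show ?thesis using w e'F unfolding v_def by (simp add: insert_commute)
          next
            case (Suc j) then show ?thesis using ecs i by simp
          qed
        qed
        then show ?thesis using csmax by fastforce
      next
        case True
        then obtain j where j: "j < length cs" "cs ! j = w" by (meson in_set_conv_nth)
        have j0: "j \<noteq> 0" using j w(2) unfolding v_def by (cases j) auto
        have j1: "j \<noteq> 1" using j wu unfolding u_def by auto
        define ds where "ds = take (Suc j) cs"
        have lds: "length ds = Suc j" using j unfolding ds_def by simp
        have "has_cycle F" unfolding has_cycle_def
        proof (intro exI[of _ ds] conjI allI impI)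
          show "3 \<le> length ds" using lds j0 j1 by simp
          show "distinct ds" using dcs unfolding ds_def by simp
        next
          fix i assume i: "i < length ds"
          show "{ds ! i, ds ! ((i + 1) mod length ds)} \<in> F"
          proof (cases "i = j")
            case True
            then have "(i + 1) mod length ds = 0" using lds by simp
            then show ?thesis using True j w e'F unfolding ds_def v_def
              by (simp add: insert_commute)
          next
            case False
            then have "i < j" using i lds by simp
            then have "(i + 1) mod length ds = Suc i" using lds by simp
            then show ?thesis using \<open>i < j\<close> j ecs unfolding ds_def by simp
          qed
        qed
        then show ?thesis using nc by simp
      qed
    qed
  qed
  then show ?thesis using eF by blast
qed

lemma forest_card:
  "finite S \<Longrightarrow> S \<noteq> {} \<Longrightarrow> F \<subseteq> Pow S \<Longrightarrow> \<forall>e\<in>F. \<exists>x y. e = {x, y} \<and> x \<noteq> y \<Longrightarrow>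
   forest F \<Longrightarrow> card F + 1 \<le> card S"
proof (induction "card S" arbitrary: S F rule: less_induct)
  case less
  show ?case
  proof (cases "F = {}")
    case True
    then show ?thesis using less.prems(1,2) by (simp add: Suc_le_eq card_gt_0_iff)
  next
    case False
    have finF: "finite F" using finite_subset[OF less.prems(3)] less.prems(1) by simp
    obtain v e where ve: "e \<in> F" "v \<in> e" "\<forall>e'\<in>F. v \<in> e' \<longrightarrow> e' = e"
    proof -
      have "\<not> has_cycle F" using less.prems(5) unfolding forest_def .
      then show ?thesis using leaf[OF finF False less.prems(4)] that by blast
    qed
    obtain x y where xy: "e = {x, y}" "x \<noteq> y" using less.prems(4) ve(1) by blast
    obtain u where u: "e = {v, u}" "u \<noteq> v"
    proof (cases "v = x")
      case True then show ?thesis using that xy by blast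
    next
      case False then have "v = y" using ve(2) xy by blast
      then have "e = {v, x}" using xy by (simp add: insert_commute)
      then show ?thesis using that xy \<open>v = y\<close> by blast
    qed
    have sub: "F - {e} \<subseteq> Pow (S - {v})" using ve less.prems(3) by blast
    have uS: "u \<in> S - {v}" using u ve less.prems(3) by blast
    have vS: "v \<in> S" using u ve less.prems(3) by blast
    have lt: "card (S - {v}) < card S" by (rule card_Diff1_less[OF less.prems(1) vS])
    have "card (F - {e}) + 1 \<le> card (S - {v})"
    proof (rule less.hyps[OF lt])
      show "finite (S - {v})" using less.prems(1) by simp
      show "S - {v} \<noteq> {}" using uS by blast
      show "F - {e} \<subseteq> Pow (S - {v})" by (rule sub)
      show "\<forall>e\<in>F - {e}. \<exists>x y. e = {x, y} \<and> x \<noteq> y" using less.prems(4) by blast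
      show "forest (F - {e})" using less.prems(5) forest_sub by blast
    qed
    moreover have "card (F - {e}) = card F - 1" by (rule card_Diff_singleton[OF ve(1)])
    moreover have "card (S - {v}) = card S - 1" by (rule card_Diff_singleton[OF vS])
    moreover have "card F \<ge> 1" using finF False by (simp add: Suc_leI card_gt_0_iff)
    ultimately show ?thesis by linarith
  qed
qed

lemma handshake:
  assumes "finite S" "EE \<subseteq> Pow S" "\<forall>e\<in>EE. card e = 2"
  shows "(\<Sum>v\<in>S. card {e\<in>EE. v \<in> e}) = 2 * card EE"
proof -
  have finEE: "finite EE" using finite_subset[OF assms(2)] assms(1) by simp
  have "(\<Sum>v\<in>S. card {e\<in>EE. v \<in> e}) = (\<Sum>v\<in>S. \<Sum>e\<in>EE. if v \<in> e then 1 else 0)"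
    using finEE by (simp add: sum.inter_filter[symmetric])
  also have "\<dots> = (\<Sum>e\<in>EE. \<Sum>v\<in>S. if v \<in> e then 1 else 0)" by (rule sum.swap)
  also have "\<dots> = (\<Sum>e\<in>EE. card e)"
  proof (rule sum.cong[OF refl])
    fix e assume "e \<in> EE"
    then have "e \<subseteq> S" using assms by blast
    then have "{v\<in>S. v \<in> e} = e" by blast
    then show "(\<Sum>v\<in>S. if v \<in> e then 1 else 0) = card e"
      using assms(1) by (simp add: sum.inter_filter[symmetric])
  qed
  also have "\<dots> = 2 * card EE" using assms by simp
  finally show ?thesis .
qed

lemma single_forest:
  assumes "x \<noteq> y" shows "forest {{x, y}}"
  unfolding forest_def has_cycle_def
proof
  assume "\<exists>cs. 3 \<le> length cs \<and> distinct cs \<and> (\<forall>i<length cs. {cs ! i, cs ! ((i + 1) mod length cs)} \<in> {{x, y}})"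
  then obtain cs where l: "3 \<le> length cs" and d: "distinct cs"
    and c: "\<forall>i<length cs. {cs ! i, cs ! ((i + 1) mod length cs)} \<in> {{x, y}}" by blast
  have cne: "cs \<noteq> []" using l by auto
  have "{cs ! 0, cs ! 1} = {x, y}" using c[rule_format, of 0] l by fastforce
  moreover have "{cs ! 1, cs ! 2} = {x, y}" using c[rule_format, of 1] l by (simp add: numeral_2_eq_2)
  moreover have "cs ! 0 \<noteq> cs ! 1" using nth_eq_iff_index_eq[OF d, of 0 1] l cne by simp
  moreover have "cs ! 0 \<noteq> cs ! 2" using nth_eq_iff_index_eq[OF d, of 0 2] l cne by simp
  moreover have "cs ! 1 \<noteq> cs ! 2" using nth_eq_iff_index_eq[OF d, of 1 2] l cne by simp
  ultimately have "{cs ! 0, cs ! 1} = {cs ! 1, cs ! 2}" "cs ! 0 \<noteq> cs ! 1" "cs ! 0 \<noteq> cs ! 2"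
    by simp_all
  then show False by (simp add: doubleton_eq_iff)
qed

lemma arb_witness:
  assumes "finite E" "\<forall>e\<in>E. \<exists>x y. e = {x, y} \<and> x \<noteq> y"
  shows "\<exists>f :: nat \<Rightarrow> 'a set set. (\<forall>i<arboricity E. f i \<subseteq> E \<and> forest (f i)) \<and> E = (\<Union>i<arboricity E. f i)"
proof -
  obtain xs where xs: "set xs = E" using finite_list assms by blast
  have h: "\<exists>f :: nat \<Rightarrow> 'a set set. (\<forall>i<length xs. f i \<subseteq> E \<and> forest (f i)) \<and> E = (\<Union>i<length xs. f i)"
  proof (intro exI[of _ "\<lambda>i. {xs ! i}"] conjI allI impI)
    fix i assume i: "i < length xs"
    show "{xs ! i} \<subseteq> E" using xs i by auto
    obtain x y where "xs ! i = {x, y}" "x \<noteq> y" using assms(2) xs i nth_mem by blast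
    then show "forest {xs ! i}" using single_forest by simp
  next
    show "E = (\<Union>i<length xs. {xs ! i})" using xs by (auto simp: set_conv_nth)
  qed
  show ?thesis unfolding arboricity_def
    using LeastI[where P="\<lambda>k. \<exists>f :: nat \<Rightarrow> 'a set set. (\<forall>i<k. f i \<subseteq> E \<and> forest (f i)) \<and> E = (\<Union>i<k. f i)", OF h]
    by blast
qed

lemma escape:
  assumes clo: "\<forall>e\<in>E. \<forall>u\<in>S-{c}. u \<in> e \<longrightarrow> e \<subseteq> S"
    and T: "connected_on E T" and p: "p \<in> T" "p \<in> S" "p \<noteq> c"
    and q: "q \<in> T" "q \<notin> S" and cT: "c \<notin> T"
  shows False
proof -
  have pq: "(p, q) \<in> (R E T)\<^sup>*" using T p q unfolding conn_iff by blast
  have "(p, t) \<in> (R E T)\<^sup>* \<Longrightarrow> t \<in> S \<and> t \<noteq> c" for t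
  proof (induction rule: rtrancl_induct)
    case base then show ?case using p by simp
  next
    case (step y z)
    then have "{y, z} \<in> E" "z \<in> T" unfolding R_def by auto
    then show ?case using clo step.IH cT by blast
  qed
  then show False using pq q by blast
qed


lemma split_step:
  assumes SV: "S \<subseteq> V" and finV: "finite V"
    and edg: "\<forall>e\<in>E. \<exists>x y. e = {x, y} \<and> x \<noteq> y \<and> x \<in> V \<and> y \<in> V"
    and cS: "c \<in> S" and conS: "connected_on E S"
    and clo: "\<forall>e\<in>E. \<forall>u\<in>S-{c}. u \<in> e \<longrightarrow> e \<subseteq> S"
    and xS: "x \<in> S" and nc: "\<not> connected_on E (S - {x})"
  shows "\<exists>S'. x \<in> S' \<and> S' \<subseteq> V \<and> 2 \<le> card S' \<and> connected_on E S' \<and>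
           (\<forall>e\<in>E. \<forall>u\<in>S'-{x}. u \<in> e \<longrightarrow> e \<subseteq> S') \<and> card S' < card S"
proof -
  let ?A = "S - {x}"
  let ?C = "\<lambda>w. {t. (w, t) \<in> (R E ?A)\<^sup>*}"
  obtain y z where yz: "y \<in> ?A" "z \<in> ?A" "(y, z) \<notin> (R E ?A)\<^sup>*"
    using nc unfolding conn_iff by blast
  have CA: "?C w \<subseteq> ?A" if "w \<in> ?A" for w
  proof
    fix t assume "t \<in> ?C w"
    then have "(w, t) \<in> (R E ?A)\<^sup>*" by simp
    then show "t \<in> ?A" using R_in[of w t E ?A] that by blast
  qed
  obtain w q where wq: "w \<in> ?A" "q \<in> S" "q \<noteq> x" "q \<notin> ?C w" "c \<notin> ?C w"
  proof (cases "x = c")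
    case True
    then show ?thesis using that[of y z] yz CA[of y] by blast
  next
    case False
    show ?thesis
    proof (cases "(y, c) \<in> (R E ?A)\<^sup>*")
      case True
      have "(z, c) \<notin> (R E ?A)\<^sup>*"
      proof
        assume "(z, c) \<in> (R E ?A)\<^sup>*"
        then have "(y, z) \<in> (R E ?A)\<^sup>*" using R_hub[OF R_sym[OF True] R_sym] by blast
        then show False using yz(3) by blast
      qed
      then show ?thesis using that[of z c] yz False cS by blast
    next
      case f2: False
      then show ?thesis using that[of y c] yz False cS by blast
    qed
  qed
  define C where "C = ?C w"
  define S' where "S' = insert x C"
  have wC: "w \<in> C" unfolding C_def by simp
  have CA': "C \<subseteq> ?A" unfolding C_def using CA wq by blast
  have finS: "finite S" using finite_subset[OF SV finV] .
  have S'S: "S' \<subseteq> S" using CA' xS unfolding S'_def by blast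
  have finS': "finite S'" using finite_subset[OF S'S finS] .
  have c2: "2 \<le> card S'"
  proof -
    have "{x, w} \<subseteq> S'" using wC unfolding S'_def by blast
    moreover have "card {x, w} = 2" using wq by auto
    ultimately show ?thesis using card_mono[OF finS', of "{x, w}"] by simp
  qed
  have lt: "card S' < card S"
  proof -
    have "q \<notin> S'" using wq unfolding S'_def C_def by blast
    then have "S' \<subset> S" using S'S wq by blast
    then show ?thesis using finS psubset_card_mono by blast
  qed
  have clo': "\<forall>e\<in>E. \<forall>u\<in>S'-{x}. u \<in> e \<longrightarrow> e \<subseteq> S'"
  proof (intro ballI impI)
    fix e u assume eE: "e \<in> E" and u: "u \<in> S' - {x}" and ue: "u \<in> e"
    have uC: "u \<in> C" using u unfolding S'_def by blast
    have uc: "u \<in> S - {c}" using uC CA' wq unfolding C_def by blast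
    then have eS: "e \<subseteq> S" using clo eE ue by blast
    obtain t where et: "e = {u, t}" using other_end[of e u] edg eE ue by blast
    have "t \<in> S'"
    proof (cases "t = x")
      case True then show ?thesis unfolding S'_def by simp
    next
      case False
      then have "(u, t) \<in> R E ?A" using eE et eS uC CA' unfolding R_def by blast
      then have "t \<in> C" using uC unfolding C_def by (simp add: rtrancl_into_rtrancl)
      then show ?thesis unfolding S'_def by simp
    qed
    then show "e \<subseteq> S'" using et uC unfolding S'_def by blast
  qed
  have Cpath: "(w, p) \<in> (R E S')\<^sup>*" if "p \<in> C" for p
  proof -
    have "(w, p) \<in> (R E C)\<^sup>*" using that comp_path[of w p E ?A] unfolding C_def by simp
    then show ?thesis using R_mono[of C S'] unfolding S'_def by blast
  qed
  have wx: "(w, x) \<in> (R E S')\<^sup>*"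
  proof -
    have wS: "w \<in> S" using wq by blast
    have "(w, x) \<in> (R E S)\<^sup>*" using conS wS xS unfolding conn_iff by blast
    moreover have "(w, t) \<in> (R E S)\<^sup>* \<Longrightarrow> t \<in> C \<or> (w, x) \<in> (R E S')\<^sup>*" for t
    proof (induction rule: rtrancl_induct)
      case base then show ?case using wC by simp
    next
      case (step a b)
      show ?case
      proof (cases "(w, x) \<in> (R E S')\<^sup>*")
        case True then show ?thesis by simp
      next
        case False
        then have aC: "a \<in> C" using step.IH by blast
        have ab: "{a, b} \<in> E" "b \<in> S" using step.hyps unfolding R_def by auto
        show ?thesis
        proof (cases "b = x")
          case True
          then have "(a, x) \<in> R E S'" using ab aC unfolding R_def S'_def by auto
          then show ?thesis using Cpath[OF aC] True by (simp add: rtrancl_into_rtrancl)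
        next
          case bx: False
          have "(a, b) \<in> R E ?A" using ab aC CA' bx unfolding R_def by blast
          then have "b \<in> C" using aC unfolding C_def by (simp add: rtrancl_into_rtrancl)
          then show ?thesis by simp
        qed
      qed
    qed
    moreover have "x \<notin> C" using CA' by blast
    ultimately show ?thesis by blast
  qed
  have hub: "(w, p) \<in> (R E S')\<^sup>*" if "p \<in> S'" for p
    using that wx Cpath unfolding S'_def by blast
  have conS': "connected_on E S'"
    unfolding conn_iff
  proof (intro ballI)
    fix p1 p2 assume "p1 \<in> S'" "p2 \<in> S'"
    then show "(p1, p2) \<in> (R E S')\<^sup>*" by (intro R_hub[OF hub hub])
  qed
  show ?thesis using S'S SV c2 conS' clo' lt unfolding S'_def by blast
qed

theorem mainTheorem1:
  fixes V :: "'a set" and E :: "'a set set"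
  assumes "simple_graph V E"
    and "E \<noteq> {}"
  shows "\<exists>v\<in>V. block_vertex V E v \<and> degree E v \<le> 2 * arboricity E - 1"
proof -
  have finV: "finite V" and edg: "\<forall>e\<in>E. \<exists>x y. e = {x, y} \<and> x \<noteq> y \<and> x \<in> V \<and> y \<in> V"
    using assms(1) by (auto simp: simple_graph_def)
  have EP: "E \<subseteq> Pow V"
  proof
    fix e assume "e \<in> E"
    then obtain x y where "e = {x, y}" "x \<in> V" "y \<in> V" using edg by blast
    then show "e \<in> Pow V" by simp
  qed
  have finE: "finite E" using finite_subset[OF EP] finV by simp
  have edg2: "\<forall>e\<in>E. \<exists>x y. e = {x, y} \<and> x \<noteq> y" using edg by blast
  have card2: "\<forall>e\<in>E. card e = 2" using edg2 by fastforce
  define P where "P = (\<lambda>(S, c). c \<in> S \<and> S \<subseteq> V \<and> 2 \<le> card S \<and> connected_on E S \<and>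
       (\<forall>e\<in>E. \<forall>u\<in>S-{c}. u \<in> e \<longrightarrow> e \<subseteq> S))"
  obtain e0 where e0: "e0 \<in> E" using assms(2) by blast
  obtain x0 y0 where xy0: "e0 = {x0, y0}" "x0 \<noteq> y0" "x0 \<in> V" "y0 \<in> V" using edg e0 by blast
  define C0 where "C0 = {t. (x0, t) \<in> (R E V)\<^sup>*}"
  have "P (C0, x0)"
  proof -
    have x0C: "x0 \<in> C0" unfolding C0_def by simp
    have "(x0, y0) \<in> R E V" using xy0 e0 unfolding R_def by auto
    then have y0C: "y0 \<in> C0" unfolding C0_def by auto
    have C0V: "C0 \<subseteq> V"
    proof
      fix t assume "t \<in> C0"
      then have "(x0, t) \<in> (R E V)\<^sup>*" by (simp add: C0_def)
      then show "t \<in> V" by (rule R_in[OF _ xy0(3)])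
    qed
    have fC: "finite C0" using finite_subset[OF C0V finV] .
    have "card {x0, y0} = 2" using xy0 by simp
    then have c2: "2 \<le> card C0" using card_mono[OF fC, of "{x0,y0}"] x0C y0C by simp
    have clo: "\<forall>e\<in>E. \<forall>u\<in>C0-{x0}. u \<in> e \<longrightarrow> e \<subseteq> C0"
    proof (intro ballI impI)
      fix e u assume eE: "e \<in> E" and u: "u \<in> C0 - {x0}" and ue: "u \<in> e"
      obtain t where et: "e = {u, t}" using other_end[of e u] edg eE ue by blast
      have "t \<in> V" using EP eE et by blast
      then have "(u, t) \<in> R E V" using et eE u C0V unfolding R_def by auto
      then have "t \<in> C0" using u rtrancl_into_rtrancl[of x0 u "R E V" t] unfolding C0_def by blast
      then show "e \<subseteq> C0" using et u by blast
    qed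
    show ?thesis unfolding P_def using x0C C0V c2 clo comp_connected unfolding C0_def by auto
  qed
  then have "\<exists>Sc. P Sc \<and> (\<forall>y. P y \<longrightarrow> card (fst Sc) \<le> card (fst y))"
    by (rule ex_has_least_nat)
  then obtain Sc where PSc: "P Sc" and minSc: "\<forall>Sc'. P Sc' \<longrightarrow> card (fst Sc) \<le> card (fst Sc')"
    by auto
  obtain S c where Sc: "Sc = (S, c)" by (cases Sc)
  have PS: "c \<in> S \<and> S \<subseteq> V \<and> 2 \<le> card S \<and> connected_on E S \<and>
       (\<forall>e\<in>E. \<forall>u\<in>S-{c}. u \<in> e \<longrightarrow> e \<subseteq> S)"
    using PSc unfolding Sc P_def by simp
  then have cS: "c \<in> S" and SV: "S \<subseteq> V" and c2: "2 \<le> card S" and conS: "connected_on E S"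
    and clo: "\<forall>e\<in>E. \<forall>u\<in>S-{c}. u \<in> e \<longrightarrow> e \<subseteq> S"
    by blast+
  have minS: "card S \<le> card S'" if "P (S', c')" for S' c'
    using minSc that unfolding Sc by fastforce
  have finS: "finite S" using finite_subset[OF SV finV] .
  have bic: "\<forall>x\<in>S. connected_on E (S - {x})"
  proof (rule ballI, rule ccontr)
    fix x assume xS: "x \<in> S" and nc: "\<not> connected_on E (S - {x})"
    obtain S' where "x \<in> S' \<and> S' \<subseteq> V \<and> 2 \<le> card S' \<and> connected_on E S' \<and>
           (\<forall>e\<in>E. \<forall>u\<in>S'-{x}. u \<in> e \<longrightarrow> e \<subseteq> S') \<and> card S' < card S"
      using split_step[OF SV finV edg cS conS clo xS nc] by blast
    then have "P (S', x)" "card S' < card S" unfolding P_def by auto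
    then show False using minS by fastforce
  qed
  have Sne: "S \<noteq> {}" using cS by blast
  have bS: "biconnected_on V E S" unfolding biconnected_on_def using Sne SV conS bic by blast
  have dc: "connected_on E (B - {c})" if "biconnected_on V E B" for B
  proof (cases "c \<in> B")
    case True then show ?thesis using that unfolding biconnected_on_def by blast
  next
    case False then have "B - {c} = B" by blast
    then show ?thesis using that unfolding biconnected_on_def by simp
  qed
  have inS: "B \<subseteq> S" if "biconnected_on V E B" "p \<in> B" "p \<in> S" "p \<noteq> c" for B p
  proof (rule ccontr)
    assume "\<not> B \<subseteq> S"
    then obtain q where "q \<in> B" "q \<notin> S" by blast
    then show False using escape[OF clo dc[OF that(1)], of p q] that cS by blast
  qed
  have blockv: "block_vertex V E v" if "v \<in> S" "v \<noteq> c" for v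
  proof -
    have "B = S" if "is_block V E B" "v \<in> B" for B
    proof -
      have "B \<subseteq> S" using inS that \<open>v \<in> S\<close> \<open>v \<noteq> c\<close> unfolding is_block_def by blast
      then show ?thesis using that(1) bS unfolding is_block_def by blast
    qed
    then show ?thesis unfolding block_vertex_def cut_vertex_def using that SV by blast
  qed
  define a where "a = arboricity E"
  obtain f where f: "\<forall>i<a. f i \<subseteq> E \<and> forest (f i)" "E = (\<Union>i<a. f i)"
    using arb_witness[OF finE edg2] unfolding a_def by blast
  have a1: "1 \<le> a"
  proof (rule ccontr)
    assume "\<not> 1 \<le> a" then have "a = 0" by simp
    then show False using f(2) assms(2) by simp
  qed
  define ES where "ES = {e\<in>E. e \<subseteq> S}"
  have ESP: "ES \<subseteq> Pow S" unfolding ES_def by blast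
  have ESU: "ES = (\<Union>i<a. f i \<inter> ES)" using f(2) unfolding ES_def by blast
  have fi: "card (f i \<inter> ES) \<le> card S - 1" if "i < a" for i
  proof -
    have "forest (f i \<inter> ES)" using f(1) that forest_sub by blast
    moreover have "\<forall>e\<in>f i \<inter> ES. \<exists>x y. e = {x, y} \<and> x \<noteq> y" using edg2 unfolding ES_def by blast
    ultimately have "card (f i \<inter> ES) + 1 \<le> card S"
      using forest_card[OF finS Sne, of "f i \<inter> ES"] ESP by blast
    then show ?thesis by simp
  qed
  have cES: "card ES \<le> a * (card S - 1)"
  proof -
    have "card ES \<le> (\<Sum>i<a. card (f i \<inter> ES))" using ESU card_UN_le[of "{..<a}" "\<lambda>i. f i \<inter> ES"] by simp
    also have "\<dots> \<le> (\<Sum>i<a. card S - 1)" using fi by (intro sum_mono) simp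
    also have "\<dots> = a * (card S - 1)" by simp
    finally show ?thesis .
  qed
  have hs: "(\<Sum>v\<in>S. card {e\<in>ES. v \<in> e}) = 2 * card ES"
    using handshake[OF finS ESP] card2 unfolding ES_def by blast
  have degc: "1 \<le> card {e\<in>ES. c \<in> e}"
  proof -
    obtain p where p: "p \<in> S" "p \<noteq> c"
    proof -
      have "\<not> S \<subseteq> {c}"
      proof
        assume "S \<subseteq> {c}"
        then have "card S \<le> card {c}" using card_mono[of "{c}" S] by simp
        then show False using c2 by simp
      qed
      then show ?thesis using that by blast
    qed
    have "(c, p) \<in> (R E S)\<^sup>*" using conS p cS unfolding conn_iff by blast
    then obtain y where "(c, y) \<in> R E S" using p(2) by (cases rule: converse_rtranclE) auto
    then have "{c, y} \<in> ES" unfolding R_def ES_def by auto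
    moreover have "finite {e\<in>ES. c \<in> e}" using finE unfolding ES_def by simp
    moreover have "{e\<in>ES. c \<in> e} \<noteq> {}" using \<open>{c, y} \<in> ES\<close> by blast
    ultimately show ?thesis by (simp add: Suc_le_eq card_gt_0_iff)
  qed
  have degv: "degree E v = card {e\<in>ES. v \<in> e}" if "v \<in> S" "v \<noteq> c" for v
  proof -
    have "{e\<in>E. v \<in> e} = {e\<in>ES. v \<in> e}" using clo that unfolding ES_def by blast
    then show ?thesis unfolding degree_def by simp
  qed
  have "\<exists>v\<in>S - {c}. degree E v < 2 * a"
  proof (rule ccontr)
    assume "\<not> ?thesis"
    then have ge: "\<And>v. v \<in> S - {c} \<Longrightarrow> 2 * a \<le> card {e\<in>ES. v \<in> e}" using degv by force
    have A: "card (S - {c}) * (2 * a) \<le> (\<Sum>v\<in>S - {c}. card {e\<in>ES. v \<in> e})"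
      using sum_bounded_below[of "S - {c}" "2 * a", OF ge] by simp
    have B: "(\<Sum>v\<in>S. card {e\<in>ES. v \<in> e}) = card {e\<in>ES. c \<in> e} + (\<Sum>v\<in>S - {c}. card {e\<in>ES. v \<in> e})"
      using finS cS by (simp add: sum.remove)
    have C: "card (S - {c}) = card S - 1" by (rule card_Diff_singleton[OF cS])
    have "(card S - 1) * (2 * a) \<le> (\<Sum>v\<in>S - {c}. card {e\<in>ES. v \<in> e})" using A C by simp
    then have "(card S - 1) * (2 * a) + 1 \<le> 2 * card ES" using B hs degc by linarith
    moreover have "2 * card ES \<le> 2 * a * (card S - 1)" using cES by simp
    ultimately show False by (simp add: algebra_simps)
  qed
  then obtain v where v: "v \<in> S" "v \<noteq> c" "degree E v < 2 * a" by blast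
  have "degree E v \<le> 2 * arboricity E - 1" using v(3) a1 unfolding a_def by simp
  then show ?thesis using blockv[OF v(1,2)] SV v(1) by blast
qed

end
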